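(* Let $K, L$ be compact convex subsets of $\mathbb{R}^n$, and let $d \geq 2$ (with $d\le n$). Suppose that for every $d$-dimensional linear subspace $\xi$ of $\mathbb{R}^n$, the projection $L_\xi$ contains a translate of $K_\xi$. If $K$ and $L$ have the same diameter, then $L$ contains a translate of $K$.
   Context: For a set $S\subseteq\mathbb{R}^n$ and a linear subspace $\xi$, $S_\xi$ denotes the orthogonal projection of $S$ onto $\xi$. *)

theory Defs
  imports "HOL-Analysis.Analysis"
begin

definition orth_proj :: "'a::euclidean_space set \<Rightarrow> 'a \<Rightarrow> 'a" where
  "orth_proj V x = (THE y. y \<in> V \<and> (\<forall>z\<in>V. (x - y) \<bullet> z = 0))"

definition proj_set :: "'a::euclidean_space set \<Rightarrow> 'a set \<Rightarrow> 'a set" where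
  "proj_set V S = orth_proj V ` S"

end

theory Submission
  imports Defs
begin

lemma orth_proj_prop:
  fixes V :: "'a::euclidean_space set"
  assumes "subspace V"
  shows "orth_proj V x \<in> V \<and> (\<forall>z\<in>V. (x - orth_proj V x) \<bullet> z = 0)"
proof -
  obtain y z where y: "y \<in> span V" and z: "\<And>w. w \<in> span V \<Longrightarrow> orthogonal z w" and xyz: "x = y + z"
    using orthogonal_subspace_decomp_exists by blast
  have sV: "span V = V" using assms by (simp add: span_eq_iff)
  have ex: "y \<in> V \<and> (\<forall>w\<in>V. (x - y) \<bullet> w = 0)"
    using y z xyz sV by (auto simp: orthogonal_def)
  have uniq: "y' = y" if "y' \<in> V \<and> (\<forall>w\<in>V. (x - y') \<bullet> w = 0)" for y'
  proof -
    have "y' - y \<in> V" using that ex assms subspace_diff by blast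
    hence "(x - y') \<bullet> (y' - y) = 0" "(x - y) \<bullet> (y' - y) = 0" using that ex by auto
    hence "((x - y) - (x - y')) \<bullet> (y' - y) = 0" by (simp only: inner_diff_left)
    moreover have "(x - y) - (x - y') = y' - y" by simp
    ultimately have "(y' - y) \<bullet> (y' - y) = 0" by simp
    thus ?thesis by simp
  qed
  have "orth_proj V x = y" unfolding orth_proj_def
    by (rule the_equality) (use ex uniq in blast)+
  thus ?thesis using ex by simp
qed

lemma orth_proj_inner:
  fixes V :: "'a::euclidean_space set"
  assumes "subspace V" "v \<in> V"
  shows "orth_proj V x \<bullet> v = x \<bullet> v"
  using orth_proj_prop[OF assms(1), of x] assms(2) by (auto simp: inner_diff_left)

lemma exists_subspace2:
  fixes u v :: "real ^ 'n"
  assumes "2 \<le> d" "d \<le> CARD('n)"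
  shows "\<exists>\<xi>. subspace \<xi> \<and> dim \<xi> = d \<and> u \<in> \<xi> \<and> v \<in> \<xi>"
proof -
  obtain I where I: "I \<subseteq> {u,v}" "independent I" "{u,v} \<subseteq> span I"
    by (rule maximal_independent_subset)
  have c2: "card {u,v} \<le> 2" by (cases "u = v") auto
  have cI: "card I \<le> 2" using card_mono[of "{u,v}" I] I(1) c2 by simp
  obtain B where B: "I \<subseteq> B" "B \<subseteq> UNIV" "independent B" "UNIV \<subseteq> span B"
    by (rule maximal_independent_subset_extend[OF subset_UNIV I(2)])
  have fB: "finite B" using B(3) independent_bound by blast
  have "span B = UNIV" using B(4) by auto
  hence cB: "card B = CARD('n)"
    using dim_span_eq_card_independent[OF B(3)] by (simp add: dim_UNIV)
  obtain C where C: "I \<subseteq> C" "C \<subseteq> B" "card C = d"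
    using exists_subset_between[of I d B] cI assms B(1) fB cB by auto
  have iC: "independent C" using C(2) B(3) dependent_mono by blast
  show ?thesis
    apply (rule exI[of _ "span C"])
    using dim_span_eq_card_independent[OF iC] C I span_mono[of I C]
    by auto
qed


lemma eq_from_inner:
  fixes w u :: "'a::real_inner"
  assumes "norm w \<le> norm u" "w \<bullet> u = u \<bullet> u"
  shows "w = u"
proof -
  have "w \<bullet> w \<le> u \<bullet> u"
  proof -
    have "(norm w)^2 \<le> (norm u)^2" using assms(1) by (simp add: power_mono)
    thus ?thesis by (simp add: power2_norm_eq_inner)
  qed
  hence "(w - u) \<bullet> (w - u) \<le> 0"
    using assms(2) by (simp add: inner_diff_left inner_diff_right inner_commute)
  hence "(w - u) \<bullet> (w - u) = 0" by (meson inner_ge_zero order_antisym)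
  thus ?thesis by simp
qed

lemma uniq_pt:
  fixes u :: "'a::real_inner"
  assumes L: "bounded L" "p \<in> L" "q \<in> L" "p' \<in> L" "q' \<in> L"
    and "p - q = u" "p' - q' = u" "norm u = diameter L"
  shows "p = p'"
proof -
  have n1: "norm (p - q') \<le> norm u" using diameter_bounded_bound[of L p q'] L assms(8)
    by (simp add: dist_norm)
  have n2: "norm (p' - q) \<le> norm u" using diameter_bounded_bound[of L p' q] L assms(8)
    by (simp add: dist_norm)
  have uu: "norm u * norm u = u \<bullet> u"
    by (simp add: power2_norm_eq_inner[symmetric] power2_eq_square)
  have i1: "(p - q') \<bullet> u \<le> u \<bullet> u"
  proof -
    have "(p - q') \<bullet> u \<le> norm (p - q') * norm u" by (rule norm_cauchy_schwarz)
    also have "\<dots> \<le> norm u * norm u" using n1 by (simp add: mult_right_mono)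
    finally show ?thesis using uu by simp
  qed
  have i2: "(p' - q) \<bullet> u \<le> u \<bullet> u"
  proof -
    have "(p' - q) \<bullet> u \<le> norm (p' - q) * norm u" by (rule norm_cauchy_schwarz)
    also have "\<dots> \<le> norm u * norm u" using n2 by (simp add: mult_right_mono)
    finally show ?thesis using uu by simp
  qed
  have "(p - q') + (p' - q) = (p - q) + (p' - q')" by (simp add: algebra_simps)
  also have "\<dots> = u + u" using assms(6,7) by simp
  finally have e: "(p - q') + (p' - q) = u + u" .
  have "(p - q') \<bullet> u + (p' - q) \<bullet> u = ((p - q') + (p' - q)) \<bullet> u"
    by (simp only: inner_add_left)
  also have "\<dots> = u \<bullet> u + u \<bullet> u" unfolding e by (simp only: inner_add_left)
  finally have "(p - q') \<bullet> u + (p' - q) \<bullet> u = u \<bullet> u + u \<bullet> u" .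
  hence "(p - q') \<bullet> u = u \<bullet> u" using i1 i2 by linarith
  hence "p - q' = u" using eq_from_inner n1 by blast
  hence "p - q' = p' - q'" using assms(7) by simp
  thus ?thesis by simp
qed

theorem corollary2p7:
  fixes K L :: "(real ^ 'n) set" and d :: nat
  assumes "compact K" "convex K" "compact L" "convex L"
    and "2 \<le> d" "d \<le> CARD('n)"
    and "\<And>\<xi>. subspace \<xi> \<Longrightarrow> dim \<xi> = d \<Longrightarrow>
            (\<exists>t. (\<lambda>x. t + x) ` proj_set \<xi> K \<subseteq> proj_set \<xi> L)"
    and "diameter K = diameter L"
  shows "\<exists>t. (\<lambda>x. t + x) ` K \<subseteq> L"
proof (cases "K = {}")
  case True
  then show ?thesis by auto
next
  case Kne: False
  obtain a b where ab: "a \<in> K" "b \<in> K" "dist a b = diameter K"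
    using diameter_compact_attained assms(1) Kne by blast
  define u where "u = a - b"
  have bL: "bounded L" using compact_imp_bounded assms(3) by blast
  have nu: "norm u = diameter L" using ab assms(8) by (simp add: u_def dist_norm)
  have main: "\<exists>p\<in>L. \<exists>q\<in>L. p - q = u \<and> t + orth_proj \<xi> a = orth_proj \<xi> p"
    if xi: "subspace \<xi>" "u \<in> \<xi>" and inc: "(\<lambda>x. t + x) ` proj_set \<xi> K \<subseteq> proj_set \<xi> L"
    for \<xi> t
  proof -
    have "t + orth_proj \<xi> a \<in> proj_set \<xi> L" using inc ab(1) unfolding proj_set_def by blast
    then obtain p where p: "p \<in> L" "t + orth_proj \<xi> a = orth_proj \<xi> p"
      unfolding proj_set_def by blast
    have "t + orth_proj \<xi> b \<in> proj_set \<xi> L" using inc ab(2) unfolding proj_set_def by blast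
    then obtain q where q: "q \<in> L" "t + orth_proj \<xi> b = orth_proj \<xi> q"
      unfolding proj_set_def by blast
    have "(p - q) \<bullet> u = (orth_proj \<xi> p - orth_proj \<xi> q) \<bullet> u"
      using orth_proj_inner[OF xi] by (simp add: inner_diff_left)
    also have "\<dots> = (orth_proj \<xi> a - orth_proj \<xi> b) \<bullet> u"
      using p(2) q(2) by (metis add_diff_cancel_left)
    also have "\<dots> = u \<bullet> u"
      using orth_proj_inner[OF xi] by (simp add: inner_diff_left u_def)
    finally have e: "(p - q) \<bullet> u = u \<bullet> u" .
    have "norm (p - q) \<le> norm u" using diameter_bounded_bound[OF bL p(1) q(1)] nu
      by (simp add: dist_norm)
    hence "p - q = u" using eq_from_inner e by blast
    thus ?thesis using p q by blast
  qed
  obtain \<xi>0 where x0: "subspace \<xi>0" "dim \<xi>0 = d" "u \<in> \<xi>0"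
    using exists_subspace2[OF assms(5,6), of u u] by blast
  obtain t0 where "(\<lambda>x. t0 + x) ` proj_set \<xi>0 K \<subseteq> proj_set \<xi>0 L"
    using assms(7)[OF x0(1,2)] by blast
  then obtain p0 q0 where p0: "p0 \<in> L" "q0 \<in> L" "p0 - q0 = u"
    using main[OF x0(1,3)] by blast
  define s where "s = p0 - a"
  have "s + x \<in> L" if xK: "x \<in> K" for x
  proof (rule ccontr)
    assume nin: "s + x \<notin> L"
    obtain c \<beta> where c: "c \<bullet> (s + x) < \<beta>" "\<forall>y\<in>L. c \<bullet> y > \<beta>"
      using separating_hyperplane_closed_point[OF assms(4) compact_imp_closed[OF assms(3)] nin]
      by blast
    obtain \<xi> where xi: "subspace \<xi>" "dim \<xi> = d" "u \<in> \<xi>" "c \<in> \<xi>"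
      using exists_subspace2[OF assms(5,6), of u c] by blast
    obtain t where inc: "(\<lambda>x. t + x) ` proj_set \<xi> K \<subseteq> proj_set \<xi> L"
      using assms(7)[OF xi(1,2)] by blast
    then obtain p q where pq: "p \<in> L" "q \<in> L" "p - q = u" "t + orth_proj \<xi> a = orth_proj \<xi> p"
      using main[OF xi(1,3)] by blast
    have "p = p0" using uniq_pt[OF bL pq(1,2) p0(1,2) pq(3) p0(3) nu] .
    have "t + orth_proj \<xi> x \<in> proj_set \<xi> L" using inc xK unfolding proj_set_def by blast
    then obtain y where y: "y \<in> L" "t + orth_proj \<xi> x = orth_proj \<xi> y"
      unfolding proj_set_def by blast
    have tc: "t \<bullet> c = (p0 - a) \<bullet> c"
    proof -
      have "t = orth_proj \<xi> p - orth_proj \<xi> a" using pq(4) by (metis add_diff_cancel)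
      thus ?thesis using orth_proj_inner[OF xi(1,4)] \<open>p = p0\<close> by (simp add: inner_diff_left)
    qed
    have "y \<bullet> c = (t + orth_proj \<xi> x) \<bullet> c" using y(2) orth_proj_inner[OF xi(1,4)] by simp
    also have "\<dots> = (s + x) \<bullet> c" using tc orth_proj_inner[OF xi(1,4)]
      by (simp add: inner_add_left s_def)
    finally have "c \<bullet> y = c \<bullet> (s + x)" by (simp add: inner_commute)
    thus False using c y(1) by force
  qed
  thus ?thesis by blast
qed

end
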